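(* Let $F$ be a nontrivial finite group, $\tfrac12<p<1$, $\lambda=\frac{p}{1-p}$, and $\alpha=\frac{\log|F|}{\log\lambda}$. Then there exist constants $m_0$ and $0<c\le C$ depending only on $p$ and $|F|$ such that for every integer $m\ge m_0$, \[\frac{c}{m^{\alpha}}\le\sum_{a=1}^{\infty}|F|^{-a}\Big(1-\frac{\lambda-1}{\lambda^a-1}\Big)^m\le\frac{C}{m^{\alpha}}.\] *)

theory Defs
  imports Complex_Main "HOL-Algebra.Group"
begin

end

theory Submission
  imports Defs
begin

lemma pow_ivl:
  fixes l y :: real assumes "1 < l" "1 \<le> y"
  shows "\<exists>B. l ^ B \<le> y \<and> y < l ^ Suc B"
proof -
  have ex: "\<exists>N. y < l ^ N" using real_arch_pow[OF assms(1)] by blast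
  define N where "N = (LEAST N. y < l ^ N)"
  have N: "y < l ^ N" unfolding N_def using LeastI_ex[OF ex] .
  have "N \<noteq> 0" using N assms by (cases N) auto
  then obtain B where B: "N = Suc B" by (cases N) auto
  have "\<not> y < l ^ B" using not_less_Least[of B "\<lambda>N. y < l ^ N"] B N_def by auto
  then show ?thesis using N B by (intro exI[of _ B]) (simp add: not_less)
qed

lemma x_bounds:
  fixes l :: real assumes "1 < l" "1 \<le> b"
  shows "0 < (l-1)/(l^b-1)" "(l-1)/(l^b-1) \<le> 1" "(l-1)/l^b \<le> (l-1)/(l^b-1)"
    "(l-1)/(l^b-1) \<le> 1 / l^(b-1)"
proof -
  have lb: "l \<le> l^b" using assms by (metis power_increasing power_one_right less_imp_le)
  have pos: "0 < l^b - 1" using lb assms by auto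
  show "0 < (l-1)/(l^b-1)" using pos assms by auto
  show "(l-1)/(l^b-1) \<le> 1" using pos lb by auto
  show "(l-1)/l^b \<le> (l-1)/(l^b-1)" using pos assms
    by (intro divide_left_mono) auto
  have e: "l^b = l * l^(b-1)" using assms by (metis Suc_diff_1 less_le_trans zero_less_one power_Suc le_imp_less_Suc less_Suc_eq_0_disj nat_less_le)
  have g: "1 \<le> l^(b-1)" using assms by auto
  have "(l-1) * l^(b-1) \<le> l^b - 1" using e g by (simp add: algebra_simps)
  then show "(l-1)/(l^b-1) \<le> 1 / l^(b-1)" using pos g
    by (simp add: divide_simps)
qed

lemma exp_bound:
  fixes x :: real assumes "0 \<le> x" "x \<le> 1" "0 < x" "0 < m" "1 \<le> k"
  shows "(1-x)^m \<le> (real k/(real m*x))^k"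
proof -
  have "(1-x)^m \<le> exp (-x)^m" using assms
    by (intro power_mono) (auto simp: exp_ge_add_one_self[of "-x", simplified])
  also have "\<dots> = exp (- (real m * x))" by (simp add: exp_of_nat_mult[symmetric])
  also have "\<dots> \<le> (real k/(real m*x))^k"
  proof -
    define t where "t = real m * x / real k"
    have t: "0 < t" using assms by (auto simp: t_def)
    have "t \<le> exp t" using exp_ge_add_one_self[of t] by linarith
    then have "t^k \<le> exp t ^ k" using t by (intro power_mono) auto
    also have "exp t ^ k = exp (real m * x)" using assms
      by (simp add: t_def exp_of_nat_mult[symmetric])
    finally have "t^k \<le> exp (real m * x)" .
    then have "1 / exp (real m * x) \<le> 1 / t^k" using t by (intro divide_left_mono) auto
    moreover have "1/t^k = (real k/(real m*x))^k" by (simp add: t_def power_divide)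
    ultimately show ?thesis by (simp add: exp_minus field_simps)
  qed
  finally show ?thesis .
qed


lemma main:
  fixes n l :: real assumes n: "2 \<le> n" and l: "1 < l"
  defines "al \<equiv> ln n / ln l"
  defines "T \<equiv> \<lambda>m a. (1 / n ^ Suc a) * (1 - (l-1)/(l^Suc a - 1))^m"
  shows "\<exists>c C. 0<c \<and> c \<le> C \<and> (\<forall>m::nat. 1 \<le> m \<longrightarrow>
           c / real m powr al \<le> suminf (T m) \<and> suminf (T m) \<le> C / real m powr al)"
proof -
  have al_pos: "0 < al" using n l by (simp add: al_def)
  have al_log: "al = log l n" by (simp add: al_def log_def)
  have lal: "l powr al = n" using n l al_log by simp
  have pw: "n^b = (l^b) powr al" for b :: nat
  proof -
    have "(l^b) powr al = (l powr real b) powr al" using l by (simp add: powr_realpow)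
    also have "\<dots> = (l powr al) powr real b" by (simp add: powr_powr mult.commute)
    also have "\<dots> = n^b" using lal n by (simp add: powr_realpow)
    finally show ?thesis by simp
  qed
  have xb: "0 < (l-1)/(l^Suc a-1)" "(l-1)/(l^Suc a-1) \<le> 1" "(l-1)/l^Suc a \<le> (l-1)/(l^Suc a-1)"
    "(l-1)/(l^Suc a-1) \<le> 1 / l^a" for a
    using x_bounds[OF l, of "Suc a"] by auto
  have Tnn: "0 \<le> T m a" for m a
    using xb[of a] n unfolding T_def by auto
  have Tle: "T m a \<le> (1/n)^Suc a" for m a
  proof -
    have "(1 - (l-1)/(l^Suc a - 1))^m \<le> 1" using xb[of a] by (intro power_le_one) auto
    then show ?thesis unfolding T_def using n
      by (simp add: power_one_over divide_right_mono)
  qed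
  have summ: "summable (T m)" for m
    by (rule summable_comparison_test[where g="\<lambda>a. (1/n)^Suc a"])
       (use Tnn Tle n in auto)
  define c where "c = 1 / (2 * (2*l^2) powr al)"
  have c_pos: "0 < c" using l by (simp add: c_def)
  have lower: "c / real m powr al \<le> suminf (T m)" if m: "1 \<le> m" for m :: nat
  proof -
    obtain B where B: "l^B \<le> 2*real m" "2 * real m < l^Suc B"
      using pow_ivl[OF l, of "2*real m"] m by auto
    define x where "x = (l-1)/(l^Suc (Suc B)-1)"
    have x: "0 < x" "x \<le> 1" "x \<le> 1/l^Suc B" using xb[of "Suc B"] by (auto simp: x_def)
    have "1/l^Suc B < 1/(2*real m)" using B(2) m by (intro divide_strict_left_mono) auto
    then have "x < 1 / (2 * real m)" using x(3) by linarith
    then have mx: "real m * x \<le> 1/2" using m by (simp add: field_simps)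
    have "1/2 \<le> 1 + real m * (-x)" using mx by simp
    also have "\<dots> \<le> (1 + (-x))^m" using x by (intro Bernoulli_inequality) auto
    finally have p1: "1/2 \<le> (1-x)^m" by simp
    have "n^Suc (Suc B) = (l^Suc(Suc B)) powr al" by (rule pw)
    also have "\<dots> \<le> (2*l^2 * real m) powr al"
    proof (rule powr_mono2)
      show "0 \<le> al" using al_pos by simp
      show "0 \<le> l ^ Suc (Suc B)" using l by simp
      have "l^Suc(Suc B) = l^2 * l^B" by (simp add: power2_eq_square)
      also have "\<dots> \<le> l^2 * (2 * real m)" using B(1) l by (intro mult_left_mono) auto
      finally show "l ^ Suc (Suc B) \<le> 2 * l\<^sup>2 * real m" by simp
    qed
    also have "\<dots> = (2*l^2) powr al * real m powr al" by (simp add: powr_mult)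
    finally have p2: "n^Suc (Suc B) \<le> (2*l^2) powr al * real m powr al" .
    have "c / real m powr al = (1/2) / ((2*l^2) powr al * real m powr al)"
      by (simp add: c_def)
    also have "\<dots> \<le> (1-x)^m / n^Suc (Suc B)"
      using p1 p2 n m by (intro frac_le) auto
    also have "\<dots> = T m (Suc B)" by (simp add: T_def x_def)
    also have "\<dots> \<le> suminf (T m)"
      using sum_le_suminf[OF summ, of "{Suc B}" m] Tnn by auto
    finally show ?thesis .
  qed
  obtain k where k: "n < l^k" using real_arch_pow[OF l] by blast
  have k1: "1 \<le> k" using k n by (cases k) auto
  define r where "r = l^k / n"
  have r1: "1 < r" using k n by (simp add: r_def)
  define E where "E = r/(r-1) * (real k/(l-1))^k + 1"
  have E0: "0 \<le> E" using r1 l by (simp add: E_def)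
  define C where "C = max c (n*E)"
  have upper: "suminf (T m) \<le> C / real m powr al" if m: "1 \<le> m" for m :: nat
  proof -
    obtain B where B: "l^B \<le> real m" "real m < l^Suc B"
      using pow_ivl[OF l, of "real m"] m by auto
    define D where "D = (real k/(real m*(l-1)))^k"
    have D0: "0 \<le> D" using l by (simp add: D_def)
    have Tr: "T m a \<le> r^Suc a * D" for a
    proof -
      define x where "x = (l-1)/(l^Suc a-1)"
      have x: "0 < x" "x \<le> 1" "(l-1)/l^Suc a \<le> x" using xb[of a] by (auto simp: x_def)
      have "(1-x)^m \<le> (real k/(real m*x))^k" using x m k1 by (intro exp_bound) auto
      also have "\<dots> \<le> (real k/(real m*((l-1)/l^Suc a)))^k"
        using x m l by (intro power_mono divide_left_mono mult_left_mono mult_pos_pos) auto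
      also have "\<dots> = (l^Suc a)^k * D"
      proof -
        have e2: "real k/(real m*((l-1)/l^Suc a)) = l^Suc a * (real k/(real m*(l-1)))"
          using l by (simp add: field_simps)
        show ?thesis unfolding e2 D_def by (simp only: power_mult_distrib)
      qed
      finally have "(1-x)^m \<le> (l^Suc a)^k * D" .
      then have "T m a \<le> (1/n^Suc a) * ((l^Suc a)^k * D)"
        unfolding T_def x_def[symmetric] using n by (intro mult_left_mono) auto
      also have "\<dots> = r^Suc a * D"
      proof -
        have e: "(l^Suc a)^k = (l^k)^Suc a" by (metis power_mult mult.commute)
        show ?thesis unfolding r_def power_divide e by simp
      qed
      finally show ?thesis .
    qed
    define g where "g = (\<lambda>a. if a < B then r^Suc a * D else (1/n)^Suc a)"
    have Tg: "T m a \<le> g a" for a using Tr Tle by (simp add: g_def)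
    have gs: "(\<lambda>j. g (j + B)) = (\<lambda>j. (1/n)^Suc B * (1/n)^j)"
      by (rule ext) (simp add: g_def power_add mult.commute)
    have sg: "summable g"
      using summable_iff_shift[of g B] gs n by (simp add: summable_mult)
    have "suminf (T m) \<le> suminf g" by (rule suminf_le[OF Tg summ sg])
    also have "\<dots> = (\<Sum>j. g (j + B)) + (\<Sum>a<B. g a)" by (rule suminf_split_initial_segment[OF sg])
    also have "(\<Sum>j. g (j + B)) = (1/n)^Suc B * (1 / (1 - 1/n))"
    proof -
      have "(\<Sum>j. (1/n)^Suc B * (1/n)^j) = (1/n)^Suc B * (\<Sum>j. (1/n)^j)"
        by (rule suminf_mult) (use n in simp)
      moreover have "(\<Sum>j. (1/n)^j) = 1 / (1 - 1/n)" by (rule suminf_geometric) (use n in simp)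
      ultimately show ?thesis unfolding gs by simp
    qed
    also have "(\<Sum>a<B. g a) = (\<Sum>a<B. r^Suc a * D)" by (simp add: g_def)
    also have "\<dots> = D * r * (\<Sum>a<B. r^a)" by (simp add: sum_distrib_left mult_ac)
    also have "\<dots> = D * r * ((r^B - 1)/(r-1))" using r1
      by (simp add: sum_gp_strict divide_simps) (simp add: algebra_simps)
    finally have S1: "suminf (T m) \<le> (1/n)^Suc B * (1/(1-1/n)) + D*r*((r^B-1)/(r-1))" .
    have A1: "(1/n)^Suc B * (1/(1-1/n)) \<le> (1/n)^B" using n
      by (simp add: divide_simps) 
    have A2: "D*r*((r^B-1)/(r-1)) \<le> D*r^B*(r/(r-1))"
    proof -
      have "D*r*((r^B-1)/(r-1)) = (D*r*(r^B-1))/(r-1)" by simp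
      also have "\<dots> \<le> (D*r*r^B)/(r-1)" using r1 D0
        by (intro divide_right_mono mult_left_mono) auto
      also have "\<dots> = D*r^B*(r/(r-1))" by simp
      finally show ?thesis .
    qed
    have A3: "D * r^B \<le> (real k/(l-1))^k * (1/n)^B"
    proof -
      have "D * r^B = (real k/(l-1))^k * (1/n)^B * ((l^B)^k / real m ^ k)"
      proof -
        have e1: "D = (real k/(l-1))^k / real m ^ k" unfolding D_def
          by (simp add: power_divide power_mult_distrib)
        have e2: "r^B = (l^B)^k * (1/n)^B" unfolding r_def
          by (simp add: power_divide power_mult[symmetric] mult.commute)
        show ?thesis unfolding e1 e2 by simp
      qed
      also have "\<dots> \<le> (real k/(l-1))^k * (1/n)^B * 1"
        using B(1) l m n by (intro mult_left_mono) (auto simp: power_mono)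
      finally show ?thesis by simp
    qed
    have A4: "(1/n)^B \<le> n / real m powr al"
    proof -
      have "real m powr al \<le> (l^Suc B) powr al" using B(2) al_pos by (intro powr_mono2) auto
      also have "\<dots> = n^Suc B" by (rule pw[symmetric])
      finally have "real m powr al \<le> n * n^B" by simp
      then show ?thesis using n m by (simp add: divide_simps power_one_over mult.commute)
    qed
    have "suminf (T m) \<le> (1/n)^B * E"
    proof -
      have "suminf (T m) \<le> (1/n)^B + (real k/(l-1))^k * (1/n)^B * (r/(r-1))"
      proof -
        have A3': "D*r^B*(r/(r-1)) \<le> (real k/(l-1))^k*(1/n)^B*(r/(r-1))"
          using A3 r1 by (intro mult_right_mono) auto
        show ?thesis using S1 A1 A2 A3' by linarith
      qed
      then show ?thesis by (simp add: E_def algebra_simps)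
    qed
    also have "\<dots> \<le> (n / real m powr al) * E" using A4 E0 by (intro mult_right_mono)
    also have "\<dots> \<le> C / real m powr al" using m
      by (simp add: C_def divide_simps) 
    finally show ?thesis .
  qed
  show ?thesis
    apply (rule exI[of _ c], rule exI[of _ C])
    using c_pos lower upper by (auto simp: C_def)
qed


theorem lemma2p5:
  fixes G :: "('g, 'b) monoid_scheme" (structure) and p :: real
  assumes "group G" and "finite (carrier G)" and "card (carrier G) > 1"
    and "1/2 < p" and "p < 1"
  shows "\<exists>m0::nat. \<exists>c C :: real. 0 < c \<and> c \<le> C \<and>
    (\<forall>m::nat. m \<ge> m0 \<longrightarrow>
      (let n = real (card (carrier G)); lam = p / (1 - p); alpha = ln n / ln lam;
           S = (\<Sum>a. (1 / n ^ (Suc a)) * (1 - (lam - 1) / (lam ^ (Suc a) - 1)) ^ m)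
       in c / real m powr alpha \<le> S \<and> S \<le> C / real m powr alpha))"
proof -
  have n2: "2 \<le> real (card (carrier G))" using assms(3) by simp
  have l1: "1 < p / (1 - p)" using assms(4,5) by (simp add: field_simps)
  obtain c C where cC: "0 < c" "c \<le> C"
    "\<forall>m::nat. 1 \<le> m \<longrightarrow>
      c / real m powr (ln (real (card (carrier G))) / ln (p / (1 - p))) \<le>
        (\<Sum>a. (1 / real (card (carrier G)) ^ (Suc a)) * (1 - (p / (1 - p) - 1) / ((p / (1 - p)) ^ (Suc a) - 1)) ^ m) \<and>
      (\<Sum>a. (1 / real (card (carrier G)) ^ (Suc a)) * (1 - (p / (1 - p) - 1) / ((p / (1 - p)) ^ (Suc a) - 1)) ^ m)
        \<le> C / real m powr (ln (real (card (carrier G))) / ln (p / (1 - p)))"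
    using main[OF n2 l1] by blast
  show ?thesis
    by (rule exI[of _ 1], rule exI[of _ c], rule exI[of _ C]) (use cC in \<open>simp add: Let_def\<close>)
qed

end
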